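(* Let $\beta\in[0,1]$ and let $f\in C^{3+\beta}$ with $f'>0$ on $[A,B]$. Then there is a constant $C$ depending only on $f$ (and $[A,B]$) such that for all $x_1,x_2,x_3\in[A,B]$, $$ {\rm D}(x_1,x_2,x_3;f)=1+(x_1-x_3)\left(\frac{f''(x_1)}{2f'(x_1)}+\frac{1}{6}Sf(x_1)(x_2+x_3-2x_1)+R\right),\qquad |R|\le C\Delta^{1+\beta}, $$ where $\Delta=\max\{x_1,x_2,x_3\}-\min\{x_1,x_2,x_3\}$.
   Context: The ratio distortion of three points with respect to a strictly increasing function $f$ is ${\rm D}(x_1,x_2,x_3;f)=\frac{f(x_1)-f(x_2)}{x_1-x_2}:\frac{f(x_2)-f(x_3)}{x_2-x_3}$; for smooth $f$ with $f'\neq0$ it is defined for non-distinct points by replacing any ratio $(f(a)-f(a))/(a-a)$ with $f'(a)$ (equivalently, by continuity). The Schwarzian derivative is $Sf=\frac{f'''}{f'}-\frac{3}{2}\left(\frac{f''}{f'}\right)^2$. $C^{3+\beta}$ means three times differentiable with $\beta$-Hölder third derivative ($\beta=0$: continuous third derivative). *)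

theory Defs
  imports "HOL-Analysis.Analysis"
begin

definition C3_holder :: "real \<Rightarrow> real \<Rightarrow> real \<Rightarrow> (real \<Rightarrow> real) \<Rightarrow> (real \<Rightarrow> real)
    \<Rightarrow> (real \<Rightarrow> real) \<Rightarrow> (real \<Rightarrow> real) \<Rightarrow> bool" where
  "C3_holder \<beta> A B f f1 f2 f3 \<longleftrightarrow>
     (\<forall>x\<in>{A..B}. (f has_real_derivative f1 x) (at x within {A..B})
                \<and> (f1 has_real_derivative f2 x) (at x within {A..B})
                \<and> (f2 has_real_derivative f3 x) (at x within {A..B}))
     \<and> continuous_on {A..B} f3
     \<and> (\<beta> > 0 \<longrightarrow> (\<exists>K. \<forall>x\<in>{A..B}. \<forall>y\<in>{A..B}. \<bar>f3 x - f3 y\<bar> \<le> K * \<bar>x - y\<bar> powr \<beta>))"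

definition diffquot :: "(real \<Rightarrow> real) \<Rightarrow> (real \<Rightarrow> real) \<Rightarrow> real \<Rightarrow> real \<Rightarrow> real" where
  "diffquot f f1 a b = (if a = b then f1 a else (f a - f b) / (a - b))"

definition ratio_distortion :: "(real \<Rightarrow> real) \<Rightarrow> (real \<Rightarrow> real) \<Rightarrow> real \<Rightarrow> real \<Rightarrow> real \<Rightarrow> real" where
  "ratio_distortion f f1 x1 x2 x3 = diffquot f f1 x1 x2 / diffquot f f1 x2 x3"

definition schwarzian :: "(real \<Rightarrow> real) \<Rightarrow> (real \<Rightarrow> real) \<Rightarrow> (real \<Rightarrow> real) \<Rightarrow> real \<Rightarrow> real" where
  "schwarzian f1 f2 f3 x = f3 x / f1 x - 3/2 * (f2 x / f1 x)^2"

end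

theory Submission
  imports Defs
begin


lemma mvt_seg:
  fixes h h' :: "real \<Rightarrow> real"
  assumes "\<forall>x\<in>{min u v..max u v}. (h has_real_derivative h' x) (at x within S)"
    and "{min u v..max u v} \<subseteq> S"
  shows "\<exists>\<xi>\<in>{min u v..max u v}. h u - h v = h' \<xi> * (u - v)"
proof -
  have gen: "\<exists>\<xi>\<in>{p..q}. h q - h p = h' \<xi> * (q - p)"
    if pq: "p \<le> q" "{p..q} = {min u v..max u v}" for p q
  proof -
    have "\<And>x. p \<le> x \<Longrightarrow> x \<le> q \<Longrightarrow> (h has_derivative (*) (h' x)) (at x within {p..q})"
      using assms pq by (auto simp: has_field_derivative_def intro: has_derivative_subset)
    from mvt_very_simple[OF pq(1) this] show ?thesis by auto
  qed
  show ?thesis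
  proof (cases "u \<le> v")
    case True
    from gen[of u v] True obtain \<xi> where "\<xi>\<in>{u..v}" "h v - h u = h' \<xi> * (v - u)" by auto
    then show ?thesis using True by (intro bexI[of _ \<xi>]) (auto simp: algebra_simps)
  next
    case False
    from gen[of v u] False obtain \<xi> where "\<xi>\<in>{v..u}" "h u - h v = h' \<xi> * (u - v)" by auto
    then show ?thesis using False by (intro bexI[of _ \<xi>]) auto
  qed
qed

lemma G1:
  fixes h h' :: "real \<Rightarrow> real"
  assumes "\<forall>x\<in>{min u v..max u v}. (h has_real_derivative h' x) (at x within S)"
    and "{min u v..max u v} \<subseteq> S"
    and "\<forall>x\<in>{min u v..max u v}. \<bar>h' x\<bar> \<le> M"
  shows "\<bar>h u - h v\<bar> \<le> M * \<bar>u - v\<bar>"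
proof -
  obtain \<xi> where \<xi>: "\<xi>\<in>{min u v..max u v}" "h u - h v = h' \<xi> * (u - v)"
    using mvt_seg[OF assms(1,2)] by blast
  have "\<bar>h u - h v\<bar> = \<bar>h' \<xi>\<bar> * \<bar>u - v\<bar>" using \<xi> by (simp add: abs_mult)
  also have "\<dots> \<le> M * \<bar>u - v\<bar>" using assms(3) \<xi>(1) by (intro mult_right_mono) auto
  finally show ?thesis .
qed

lemma dq_mvt:
  assumes "\<forall>x\<in>{min u v..max u v}. (f has_real_derivative f1 x) (at x within S)"
    and "{min u v..max u v} \<subseteq> S"
  shows "\<exists>\<xi>\<in>{min u v..max u v}. diffquot f f1 u v = f1 \<xi>"
proof (cases "u = v")
  case True then show ?thesis by (auto simp: diffquot_def intro: bexI[of _ u])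
next
  case False
  obtain \<xi> where \<xi>: "\<xi>\<in>{min u v..max u v}" "f u - f v = f1 \<xi> * (u - v)"
    using mvt_seg[OF assms] by blast
  then show ?thesis using False by (auto simp: diffquot_def)
qed

lemma dq_bound:
  assumes "\<forall>x\<in>{min u v..max u v}. (f has_real_derivative f1 x) (at x within S)"
    and "{min u v..max u v} \<subseteq> S" "\<forall>x\<in>{min u v..max u v}. \<bar>f1 x\<bar> \<le> M"
  shows "\<bar>diffquot f f1 u v\<bar> \<le> M"
  using dq_mvt[OF assms(1,2)] assms(3) by force



lemma taylor2:
  fixes g h1 h2 :: "real \<Rightarrow> real"
  assumes dg: "\<forall>x\<in>{lo..hi}. (g has_real_derivative h1 x) (at x within S)"
    and dh: "\<forall>x\<in>{lo..hi}. (h1 has_real_derivative h2 x) (at x within S)"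
    and IS: "{lo..hi} \<subseteq> S" and bd: "\<forall>x\<in>{lo..hi}. \<bar>h2 x\<bar> \<le> M"
    and y: "y \<in> {lo..hi}" and z: "z \<in> {lo..hi}"
  shows "\<bar>g z - g y - h1 y * (z - y)\<bar> \<le> M * (z - y)^2"
proof -
  have sub: "{min a b..max a b} \<subseteq> {lo..hi}" if "a \<in> {lo..hi}" "b \<in> {lo..hi}" for a b
    using that by auto
  have seg: "{min z y..max z y} \<subseteq> {lo..hi}" using sub y z by blast
  have M0: "0 \<le> M" using bd y by force
  have b1: "\<bar>h1 w - h1 y\<bar> \<le> M * \<bar>z - y\<bar>" if w: "w \<in> {min z y..max z y}" for w
  proof -
    have wI: "w \<in> {lo..hi}" using w seg by blast
    have s2: "{min w y..max w y} \<subseteq> {lo..hi}" using sub[OF wI y] .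
    have "\<bar>h1 w - h1 y\<bar> \<le> M * \<bar>w - y\<bar>"
      using dh s2 IS bd by (intro G1[where h'=h2 and S=S]) blast+
    also have "\<dots> \<le> M * \<bar>z - y\<bar>" using w M0 by (intro mult_left_mono) auto
    finally show ?thesis .
  qed
  have dphi: "\<forall>x\<in>{min z y..max z y}. ((\<lambda>w. g w - g y - h1 y * (w - y)) has_real_derivative (h1 x - h1 y)) (at x within S)"
  proof
    fix x assume "x \<in> {min z y..max z y}"
    then have "x \<in> {lo..hi}" using seg by blast
    then have "(g has_real_derivative h1 x) (at x within S)" using dg by blast
    then show "((\<lambda>w. g w - g y - h1 y * (w - y)) has_real_derivative (h1 x - h1 y)) (at x within S)"
      by (auto intro!: derivative_eq_intros)
  qed
  have "\<bar>(g z - g y - h1 y * (z - y)) - (g y - g y - h1 y * (y - y))\<bar> \<le> (M * \<bar>z - y\<bar>) * \<bar>z - y\<bar>"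
    using seg IS b1 by (intro G1[where h="\<lambda>w. g w - g y - h1 y * (w - y)", OF dphi]) blast+
  then show ?thesis by (simp add: power2_eq_square abs_mult_self_eq)
qed

lemma second_diff:
  fixes g h1 h2 :: "real \<Rightarrow> real"
  assumes dg: "\<forall>x\<in>{lo..hi}. (g has_real_derivative h1 x) (at x within S)"
    and dh: "\<forall>x\<in>{lo..hi}. (h1 has_real_derivative h2 x) (at x within S)"
    and IS: "{lo..hi} \<subseteq> S" and bd: "\<forall>x\<in>{lo..hi}. \<bar>h2 x\<bar> \<le> M"
    and bd1: "\<forall>x\<in>{lo..hi}. \<bar>h1 x\<bar> \<le> M * (hi - lo)"
    and lo: "lo = min x1 (min x2 x3)" and hi: "hi = max x1 (max x2 x3)"
  shows "\<bar>diffquot g h1 x1 x2 - diffquot g h1 x2 x3\<bar> \<le> 2 * M * \<bar>x1 - x3\<bar>"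
proof -
  have sub: "{min a b..max a b} \<subseteq> {lo..hi}" if "a \<in> {lo..hi}" "b \<in> {lo..hi}" for a b
    using that by auto
  have in1: "x1 \<in> {lo..hi}" "x2 \<in> {lo..hi}" "x3 \<in> {lo..hi}" using lo hi by auto
  have M0: "0 \<le> M" using bd in1 by force
  show ?thesis
  proof (cases "min x1 x3 \<le> x2 \<and> x2 \<le> max x1 x3")
    case True
    then have D: "hi - lo = \<bar>x1 - x3\<bar>" using lo hi by (auto simp: abs_if min_def max_def split: if_splits)
    have e1: "\<bar>diffquot g h1 x1 x2\<bar> \<le> M * (hi - lo)"
      using dg bd1 sub[OF in1(1,2)] IS by (intro dq_bound[where S=S]) blast+
    have e2: "\<bar>diffquot g h1 x2 x3\<bar> \<le> M * (hi - lo)"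
      using dg bd1 sub[OF in1(2,3)] IS by (intro dq_bound[where S=S]) blast+
    have "\<bar>diffquot g h1 x1 x2 - diffquot g h1 x2 x3\<bar> \<le> \<bar>diffquot g h1 x1 x2\<bar> + \<bar>diffquot g h1 x2 x3\<bar>"
      by (rule abs_triangle_ineq4)
    also have "\<dots> \<le> 2 * (M * (hi - lo))" using e1 e2 by linarith
    finally show ?thesis using D by simp
  next
    case False
    define J where "J = {min x1 x3..max x1 x3}"
    have nJ: "x2 \<notin> J" using False J_def by auto
    have JI: "J \<subseteq> {lo..hi}" using sub[OF in1(1,3)] J_def by simp
    define \<psi> where "\<psi> = (\<lambda>y. (g y - g x2) / (y - x2))"
    define \<psi>' where "\<psi>' = (\<lambda>y. (h1 y * (y - x2) - (g y - g x2) * 1) / ((y - x2) * (y - x2)))"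
    have dpsi: "\<forall>x\<in>{min x1 x3..max x1 x3}. (\<psi> has_real_derivative \<psi>' x) (at x within S)"
    proof
      fix x assume xJ: "x \<in> {min x1 x3..max x1 x3}"
      then have "x \<in> {lo..hi}" "x \<noteq> x2" using JI nJ J_def by auto
      then show "(\<psi> has_real_derivative \<psi>' x) (at x within S)"
        unfolding \<psi>_def \<psi>'_def using dg
        by (intro DERIV_divide derivative_eq_intros) auto
    qed
    have bpsi: "\<forall>x\<in>{min x1 x3..max x1 x3}. \<bar>\<psi>' x\<bar> \<le> M"
    proof
      fix x assume xJ: "x \<in> {min x1 x3..max x1 x3}"
      then have xI: "x \<in> {lo..hi}" and nx: "x \<noteq> x2" using JI nJ J_def by auto
      have t: "\<bar>g x2 - g x - h1 x * (x2 - x)\<bar> \<le> M * (x2 - x)^2"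
        by (rule taylor2[OF dg dh IS bd xI in1(2)])
      have "\<psi>' x = (g x2 - g x - h1 x * (x2 - x)) / (x2 - x)^2"
        unfolding \<psi>'_def using nx by (simp add: power2_eq_square field_simps)
      then have "\<bar>\<psi>' x\<bar> = \<bar>g x2 - g x - h1 x * (x2 - x)\<bar> / (x2 - x)^2" by simp
      also have "\<dots> \<le> M" using t nx by (simp add: divide_le_eq)
      finally show "\<bar>\<psi>' x\<bar> \<le> M" .
    qed
    have "\<bar>\<psi> x1 - \<psi> x3\<bar> \<le> M * \<bar>x1 - x3\<bar>"
      using JI IS J_def by (intro G1[OF dpsi _ bpsi]) blast
    moreover have "x1 \<noteq> x2" "x2 \<noteq> x3" using False by auto
    then have "diffquot g h1 x1 x2 = \<psi> x1" "diffquot g h1 x2 x3 = \<psi> x3"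
      unfolding diffquot_def \<psi>_def by (auto simp: field_simps)
    ultimately show ?thesis using M0 by (smt (verit) abs_ge_zero mult_right_mono)
  qed
qed



lemma alg_identity:
  fixes F1 F2 F3 a b E12 E23 Q12 Q23 :: real
  assumes F1: "F1 \<noteq> 0" and Q: "Q23 \<noteq> 0" and b: "b \<noteq> 0"
    and q12: "Q12 = F1 + F2/2*a + F3/6*a^2 + E12"
    and q23: "Q23 = F1 + F2/2*(a+b) + F3/6*(a^2+a*b+b^2) + E23"
  defines "s \<equiv> a + b"
  defines "mn \<equiv> F2/(2*F1) + 1/6*(F3/F1 - 3/2*(F2/F1)^2)* s"
  defines "rh \<equiv> F3/6*(a^2+a*b+b^2) + E23"
  shows "(Q12/Q23 - 1)/(-b) - mn
     = (-(E12-E23)/b + (- F2*F3* s^2/(12*F1) + F2^3* s^2/(8*F1^2) - mn*rh))/Q23"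
proof -
  have q23': "Q23 = F1 + F2* s/2 + rh" using q23 unfolding s_def rh_def by (simp add: algebra_simps)
  have d: "Q12 - Q23 = -b*(F2/2 + F3/6* s) + (E12 - E23)"
    using q12 q23 unfolding s_def by (simp add: field_simps power2_eq_square)
  have "(Q12/Q23 - 1)/(-b) = ((Q12 - Q23)/(-b))/Q23" using Q by (simp add: field_simps)
  also have "(Q12 - Q23)/(-b) = F2/2 + F3/6* s - (E12-E23)/b"
  proof -
    have "(Q12 - Q23)/(-b) = (-b*(F2/2 + F3/6* s))/(-b) + (E12 - E23)/(-b)"
      unfolding d by (rule add_divide_distrib)
    also have "(-b*(F2/2 + F3/6* s))/(-b) = F2/2 + F3/6* s" using b by simp
    finally show ?thesis by simp
  qed
  finally have e1: "(Q12/Q23 - 1)/(-b) = (F2/2 + F3/6* s - (E12-E23)/b)/Q23" .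
  have e2: "mn = (mn*Q23)/Q23" using Q by simp
  have e3: "mn*Q23 = F2/2 + F3* s/6 + F2*F3* s^2/(12*F1) - F2^3* s^2/(8*F1^2) + mn*rh"
    unfolding q23' mn_def using F1 by (simp add: field_simps power2_eq_square power3_eq_cube)
  show ?thesis
    apply (subst e1, subst e2, subst e3)
    using Q b by (simp add: field_simps)
qed



lemma alg_bound:
  fixes F1 F2 F3 a b E12 E23 Q12 Q23 m1 M2 M3 \<Delta> W P K :: real
  assumes m1: "0 < m1" "m1 \<le> F1" and M2: "\<bar>F2\<bar> \<le> M2" and M3: "\<bar>F3\<bar> \<le> M3"
    and a: "\<bar>a\<bar> \<le> \<Delta>" and b: "\<bar>b\<bar> \<le> \<Delta>" "b \<noteq> 0" and W: "\<Delta> \<le> W" "1 \<le> W"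
    and Q: "m1 \<le> Q23" and E23: "\<bar>E23\<bar> \<le> P*\<Delta>^2" and P: "0 \<le> P" "P \<le> K*W"
    and E: "\<bar>E12 - E23\<bar> \<le> 2*P*\<Delta>*\<bar>b\<bar>"
    and q12: "Q12 = F1 + F2/2*a + F3/6*a^2 + E12"
    and q23: "Q23 = F1 + F2/2*(a+b) + F3/6*(a^2+a*b+b^2) + E23"
  shows "\<bar>(Q12/Q23 - 1)/(-b) - (F2/(2*F1) + 1/6*(F3/F1 - 3/2*(F2/F1)^2)*(a+b))\<bar>
     \<le> (2*P*\<Delta> + (M2*M3/(3*m1) + M2^3/(2*m1^2)
           + (M2/(2*m1) + (M3/m1 + 3/2*M2^2/m1^2)*W/3)*(M3/2 + K*W))*\<Delta>^2)/m1"
proof -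
  define s where "s = a + b"
  define mn where "mn = F2/(2*F1) + 1/6*(F3/F1 - 3/2*(F2/F1)^2)* s"
  define rh where "rh = F3/6*(a^2+a*b+b^2) + E23"
  have F1p: "F1 > 0" using m1 by linarith
  have Qp: "Q23 > 0" using m1 Q by linarith
  have D0: "0 \<le> \<Delta>" using a by linarith
  have M20: "0 \<le> M2" using M2 by linarith
  have M30: "0 \<le> M3" using M3 by linarith
  have F2sq: "F2^2 \<le> M2^2" using power_mono[OF M2, of 2] by simp
  have id: "(Q12/Q23 - 1)/(-b) - mn
     = (-(E12-E23)/b + (- F2*F3* s^2/(12*F1) + F2^3* s^2/(8*F1^2) - mn*rh))/Q23"
    unfolding mn_def rh_def s_def
    by (rule alg_identity) (use F1p Qp b q12 q23 in auto)
  have s: "\<bar>s\<bar> \<le> 2*\<Delta>" using a b s_def by linarith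
  have s2: "s^2 \<le> 4*\<Delta>^2"
  proof -
    have "s^2 = \<bar>s\<bar>^2" by simp
    also have "\<dots> \<le> (2*\<Delta>)^2" by (rule power_mono[OF s]) simp
    finally show ?thesis by (simp add: power_mult_distrib)
  qed
  have eps: "\<bar>-(E12-E23)/b\<bar> \<le> 2*P*\<Delta>"
    using E b by (simp add: divide_le_eq abs_divide)
  have t1: "\<bar>- F2*F3* s^2/(12*F1)\<bar> \<le> M2*M3*\<Delta>^2/(3*m1)"
  proof -
    have "\<bar>- F2*F3* s^2/(12*F1)\<bar> = \<bar>F2\<bar>*\<bar>F3\<bar>* s^2/(12*F1)" using F1p by (simp add: abs_mult abs_divide)
    also have "\<dots> \<le> M2*M3*(4*\<Delta>^2)/(12*m1)"
      by (rule frac_le) (use M2 M3 s2 m1 M20 M30 in \<open>auto intro!: mult_mono\<close>)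
    finally show ?thesis by simp
  qed
  have t2: "\<bar>F2^3* s^2/(8*F1^2)\<bar> \<le> M2^3*\<Delta>^2/(2*m1^2)"
  proof -
    have "\<bar>F2^3* s^2/(8*F1^2)\<bar> = \<bar>F2\<bar>^3* s^2/(8*F1^2)" using F1p by (simp add: abs_mult abs_divide power_abs)
    also have "\<dots> \<le> M2^3*(4*\<Delta>^2)/(8*m1^2)"
      by (rule frac_le) (use M2 M3 s2 m1 M20 in \<open>auto intro!: mult_mono power_mono\<close>)
    also have "\<dots> = M2^3*\<Delta>^2/(2*m1^2)" using m1 by (simp add: field_simps)
    finally show ?thesis .
  qed
  have tm: "\<bar>mn\<bar> \<le> M2/(2*m1) + (M3/m1 + 3/2*M2^2/m1^2)*W/3"
  proof -
    have u1: "\<bar>F2/(2*F1)\<bar> \<le> M2/(2*m1)"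
      using F1p by (simp add: abs_divide) (rule frac_le, use M2 m1 M20 in auto)
    have u2: "\<bar>F3/F1\<bar> \<le> M3/m1" using F1p by (simp add: abs_divide) (rule frac_le, use M3 m1 M30 in auto)
    have u3: "\<bar>(F2/F1)^2\<bar> \<le> M2^2/m1^2"
      using F1p by (simp add: abs_divide power_divide) (rule frac_le, use F2sq m1 M20 in \<open>auto intro: power_mono\<close>)
    have u4: "\<bar>F3/F1 - 3/2*(F2/F1)^2\<bar> \<le> M3/m1 + 3/2*M2^2/m1^2" 
    proof -
      have "\<bar>3/2*(F2/F1)^2\<bar> = 3/2*\<bar>(F2/F1)^2\<bar>" by (simp add: abs_mult)
      then show ?thesis using u2 u3 abs_triangle_ineq4[of "F3/F1" "3/2*(F2/F1)^2"] by linarith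
    qed
    have "\<bar>1/6*(F3/F1 - 3/2*(F2/F1)^2)* s\<bar> = \<bar>F3/F1 - 3/2*(F2/F1)^2\<bar> * \<bar>s\<bar> / 6" by (simp add: abs_mult)
    also have "\<dots> \<le> (M3/m1 + 3/2*M2^2/m1^2) * (2*W) / 6"
      using u4 s W m1 M20 M30 by (intro divide_right_mono mult_mono) auto
    also have "\<dots> = (M3/m1 + 3/2*M2^2/m1^2)*W/3" by simp
    finally have "\<bar>1/6*(F3/F1 - 3/2*(F2/F1)^2)* s\<bar> \<le> (M3/m1 + 3/2*M2^2/m1^2)*W/3" .
    then show ?thesis using u1 unfolding mn_def by linarith
  qed
  have trho: "\<bar>rh\<bar> \<le> (M3/2 + K*W)*\<Delta>^2"
  proof -
    have ab: "\<bar>a^2+a*b+b^2\<bar> \<le> 3*\<Delta>^2"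
    proof -
      have "\<bar>a^2+a*b+b^2\<bar> \<le> \<bar>a\<bar>^2 + \<bar>a\<bar>*\<bar>b\<bar> + \<bar>b\<bar>^2"
      proof -
        have n: "0 \<le> (a+b)^2 + a^2 + b^2" by simp
        have e: "(a+b)^2 + a^2 + b^2 = 2*(a^2+a*b+b^2)" by (simp add: power2_eq_square algebra_simps)
        have "a*b \<le> \<bar>a\<bar>*\<bar>b\<bar>" by (metis abs_ge_self abs_mult)
        moreover have "0 \<le> a^2+a*b+b^2" using n unfolding e by simp
        ultimately show ?thesis by (simp add: abs_of_nonneg)
      qed
      also have "\<dots> \<le> \<Delta>^2 + \<Delta>*\<Delta> + \<Delta>^2"
        using a b by (intro add_mono mult_mono power_mono) auto
      finally show ?thesis by (simp add: power2_eq_square)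
    qed
    have "\<bar>F3/6*(a^2+a*b+b^2)\<bar> = \<bar>F3\<bar>*\<bar>a^2+a*b+b^2\<bar>/6" by (simp add: abs_mult)
    also have "\<dots> \<le> M3*(3*\<Delta>^2)/6" using M3 ab M30 by (intro divide_right_mono mult_mono) auto
    finally have r1: "\<bar>F3/6*(a^2+a*b+b^2)\<bar> \<le> M3/2*\<Delta>^2" by simp
    have r2: "P*\<Delta>^2 \<le> K*W*\<Delta>^2" using P by (intro mult_right_mono) auto
    have "\<bar>rh\<bar> \<le> \<bar>F3/6*(a^2+a*b+b^2)\<bar> + \<bar>E23\<bar>" unfolding rh_def by (rule abs_triangle_ineq)
    moreover have "(M3/2 + K*W)*\<Delta>^2 = M3/2*\<Delta>^2 + K*W*\<Delta>^2" by (simp add: distrib_right)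
    ultimately show ?thesis using r1 r2 E23 by linarith
  qed
  have tmr: "\<bar>mn*rh\<bar> \<le> (M2/(2*m1) + (M3/m1 + 3/2*M2^2/m1^2)*W/3)*((M3/2 + K*W)*\<Delta>^2)"
    unfolding abs_mult by (rule mult_mono[OF tm trho]) (use tm in auto)
  have num: "\<bar>-(E12-E23)/b + (- F2*F3* s^2/(12*F1) + F2^3* s^2/(8*F1^2) - mn*rh)\<bar>
      \<le> 2*P*\<Delta> + (M2*M3/(3*m1) + M2^3/(2*m1^2)
           + (M2/(2*m1) + (M3/m1 + 3/2*M2^2/m1^2)*W/3)*(M3/2 + K*W))*\<Delta>^2"
  proof -
    have tri: "\<bar>x1 + (x2 + x3 - x4)\<bar> \<le> \<bar>x1\<bar> + \<bar>x2\<bar> + \<bar>x3\<bar> + \<bar>x4\<bar>" for x1 x2 x3 x4 :: real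
      by linarith
    have dist: "(A + B + C*D)*\<Delta>^2 = A*\<Delta>^2 + B*\<Delta>^2 + C*(D*\<Delta>^2)" for A B C D :: real
      by (simp add: algebra_simps)
    have t1': "\<bar>- F2*F3* s^2/(12*F1)\<bar> \<le> M2*M3/(3*m1)*\<Delta>^2" using t1 by simp
    have t2': "\<bar>F2^3* s^2/(8*F1^2)\<bar> \<le> M2^3/(2*m1^2)*\<Delta>^2" using t2 by simp
    show ?thesis unfolding dist
      using tri[of "-(E12-E23)/b" "- F2*F3* s^2/(12*F1)" "F2^3* s^2/(8*F1^2)" "mn*rh"] eps t1' t2' tmr
      by linarith
  qed
  have "\<bar>(Q12/Q23 - 1)/(-b) - mn\<bar> = \<bar>-(E12-E23)/b + (- F2*F3* s^2/(12*F1) + F2^3* s^2/(8*F1^2) - mn*rh)\<bar> / Q23"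
    using id Qp by (simp add: abs_divide)
  also have "\<dots> \<le> (2*P*\<Delta> + (M2*M3/(3*m1) + M2^3/(2*m1^2)
           + (M2/(2*m1) + (M3/m1 + 3/2*M2^2/m1^2)*W/3)*(M3/2 + K*W))*\<Delta>^2)/m1"
    by (rule frac_le) (use num m1 Q in auto)
  finally show ?thesis unfolding mn_def s_def .
qed



lemma dq_sym: "diffquot f f1 u v = diffquot f f1 v u"
  unfolding diffquot_def by (auto simp: field_simps)

lemma dq_decomp:
  fixes f f1 :: "real \<Rightarrow> real" and c F0 F1 F2 F3 :: real
  defines "g \<equiv> \<lambda>y. f y - (F0 + F1*(y-c) + F2*(y-c)^2/2 + F3*(y-c)^3/6)"
  defines "h1 \<equiv> \<lambda>y. f1 y - F1 - F2*(y-c) - F3*(y-c)^2/2"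
  shows "diffquot f f1 u v = F1 + F2/2*((u-c)+(v-c)) + F3/6*((u-c)^2+(u-c)*(v-c)+(v-c)^2) + diffquot g h1 u v"
proof (cases "u = v")
  case True then show ?thesis unfolding diffquot_def h1_def by (simp add: field_simps power2_eq_square)
next
  case False
  have e: "g u - g v = (f u - f v) - (u - v) * (F1 + F2/2*((u-c)+(v-c)) + F3/6*((u-c)^2+(u-c)*(v-c)+(v-c)^2))"
    unfolding g_def by (simp add: field_simps power2_eq_square power3_eq_cube)
  have "diffquot g h1 u v = (f u - f v)/(u-v) - (F1 + F2/2*((u-c)+(v-c)) + F3/6*((u-c)^2+(u-c)*(v-c)+(v-c)^2))"
    using False unfolding diffquot_def e by (simp add: diff_divide_distrib)
  then show ?thesis using False unfolding diffquot_def by simp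
qed

lemma bound_cont:
  fixes g :: "real \<Rightarrow> real"
  assumes "continuous_on {A..B} g"
  shows "\<exists>M. \<forall>x\<in>{A..B}. \<bar>g x\<bar> \<le> M"
proof -
  have "bounded (g ` {A..B})" using compact_continuous_image[OF assms] compact_imp_bounded by auto
  then show ?thesis unfolding bounded_iff by auto
qed



theorem proposition1:
  fixes \<beta> A B :: real and f f1 f2 f3 :: "real \<Rightarrow> real"
  assumes "0 \<le> \<beta>" "\<beta> \<le> 1"
    and "C3_holder \<beta> A B f f1 f2 f3"
    and "\<forall>x\<in>{A..B}. f1 x > 0"
  shows "\<exists>C. \<forall>x1\<in>{A..B}. \<forall>x2\<in>{A..B}. \<forall>x3\<in>{A..B}. \<exists>R.
           ratio_distortion f f1 x1 x2 x3
             = 1 + (x1 - x3) * (f2 x1 / (2 * f1 x1)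
                 + 1/6 * schwarzian f1 f2 f3 x1 * (x2 + x3 - 2 * x1) + R)
           \<and> \<bar>R\<bar> \<le> C * (Max {x1, x2, x3} - Min {x1, x2, x3}) powr (1 + \<beta>)"
proof (cases "A \<le> B")
  case False then show ?thesis by auto
next
  case AB: True
  note b0 = assms(1) and b1 = assms(2) and pos = assms(4)
  have d0: "\<forall>x\<in>{A..B}. (f has_real_derivative f1 x) (at x within {A..B})"
   and d1: "\<forall>x\<in>{A..B}. (f1 has_real_derivative f2 x) (at x within {A..B})"
   and d2: "\<forall>x\<in>{A..B}. (f2 has_real_derivative f3 x) (at x within {A..B})"
   and c3: "continuous_on {A..B} f3"
   and hol: "\<beta> > 0 \<longrightarrow> (\<exists>K. \<forall>x\<in>{A..B}. \<forall>y\<in>{A..B}. \<bar>f3 x - f3 y\<bar> \<le> K * \<bar>x - y\<bar> powr \<beta>)"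
    using assms(3) unfolding C3_holder_def by auto
  have c1: "continuous_on {A..B} f1" using d1 by (intro DERIV_continuous_on) auto
  have c2: "continuous_on {A..B} f2" using d2 by (intro DERIV_continuous_on) auto
  obtain x0 where x0: "x0 \<in> {A..B}" "\<forall>y\<in>{A..B}. f1 x0 \<le> f1 y"
    using continuous_attains_inf[OF compact_Icc _ c1] AB by auto
  define m1 where "m1 = f1 x0"
  have m1: "0 < m1" "\<forall>y\<in>{A..B}. m1 \<le> f1 y" using x0 pos m1_def by auto
  obtain M2' where M2': "\<forall>x\<in>{A..B}. \<bar>f2 x\<bar> \<le> M2'" using bound_cont[OF c2] by blast
  obtain M3' where M3': "\<forall>x\<in>{A..B}. \<bar>f3 x\<bar> \<le> M3'" using bound_cont[OF c3] by blast
  define M2 where "M2 = max 0 M2'"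
  define M3 where "M3 = max 0 M3'"
  have M2: "0 \<le> M2" "\<forall>x\<in>{A..B}. \<bar>f2 x\<bar> \<le> M2" using M2' M2_def by auto
  have M3: "0 \<le> M3" "\<forall>x\<in>{A..B}. \<bar>f3 x\<bar> \<le> M3" using M3' M3_def by force+
  obtain K where K: "0 \<le> K" "\<forall>x\<in>{A..B}. \<forall>y\<in>{A..B}. \<bar>f3 x - f3 y\<bar> \<le> K * \<bar>x - y\<bar> powr \<beta>"
  proof (cases "\<beta> > 0")
    case True
    then obtain K0 where K0: "\<forall>x\<in>{A..B}. \<forall>y\<in>{A..B}. \<bar>f3 x - f3 y\<bar> \<le> K0 * \<bar>x - y\<bar> powr \<beta>"
      using hol by blast
    show ?thesis
    proof (rule that[of "max 0 K0"])
      show "\<forall>x\<in>{A..B}. \<forall>y\<in>{A..B}. \<bar>f3 x - f3 y\<bar> \<le> max 0 K0 * \<bar>x - y\<bar> powr \<beta>"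
      proof (intro ballI)
        fix x y assume "x \<in> {A..B}" "y \<in> {A..B}"
        then have "\<bar>f3 x - f3 y\<bar> \<le> K0 * \<bar>x - y\<bar> powr \<beta>" using K0 by blast
        also have "\<dots> \<le> max 0 K0 * \<bar>x - y\<bar> powr \<beta>" by (intro mult_right_mono) auto
        finally show "\<bar>f3 x - f3 y\<bar> \<le> max 0 K0 * \<bar>x - y\<bar> powr \<beta>" .
      qed
    qed simp
  next
    case False
    then have be: "\<beta> = 0" using b0 by simp
    show ?thesis
    proof (rule that[of "2 * M3"])
      show "\<forall>x\<in>{A..B}. \<forall>y\<in>{A..B}. \<bar>f3 x - f3 y\<bar> \<le> 2 * M3 * \<bar>x - y\<bar> powr \<beta>"
      proof (intro ballI)
        fix x y assume xy: "x \<in> {A..B}" "y \<in> {A..B}"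
        show "\<bar>f3 x - f3 y\<bar> \<le> 2 * M3 * \<bar>x - y\<bar> powr \<beta>"
        proof (cases "x = y")
          case True then show ?thesis by simp
        next
          case False
          then have "\<bar>x - y\<bar> powr \<beta> = 1" using be by simp
          moreover have "\<bar>f3 x\<bar> \<le> M3" "\<bar>f3 y\<bar> \<le> M3" using M3 xy by auto
          ultimately show ?thesis by simp
        qed
      qed
    qed (use M3 in simp)
  qed
  define W where "W = max 1 (B - A)"
  have W: "1 \<le> W" "B - A \<le> W" using W_def by auto
  define Cs where "Cs = M2*M3/(3*m1) + M2^3/(2*m1^2)
           + (M2/(2*m1) + (M3/m1 + 3/2*M2^2/m1^2)*W/3)*(M3/2 + K*W)"
  have Cs0: "0 \<le> Cs" unfolding Cs_def using M2 M3 m1 K W by (intro add_nonneg_nonneg mult_nonneg_nonneg divide_nonneg_pos) auto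
  define C where "C = (2*K + Cs*W)/m1"
  have C0: "0 \<le> C" unfolding C_def using K Cs0 W m1 by auto
  show ?thesis
  proof (rule exI[of _ C], intro ballI)
    fix x1 x2 x3 assume x1: "x1 \<in> {A..B}" and x2: "x2 \<in> {A..B}" and x3: "x3 \<in> {A..B}"
    define lo where "lo = min x1 (min x2 x3)"
    define hi where "hi = max x1 (max x2 x3)"
    have MaxMin: "Max {x1, x2, x3} = hi" "Min {x1, x2, x3} = lo" unfolding hi_def lo_def by (simp_all add: max_def min_def)
    have IS: "{lo..hi} \<subseteq> {A..B}" using x1 x2 x3 unfolding lo_def hi_def by auto
    have segS: "{min u v..max u v} \<subseteq> {A..B}" if "u \<in> {A..B}" "v \<in> {A..B}" for u v using that by auto
    have dqpos: "m1 \<le> diffquot f f1 u v" if uv: "u \<in> {A..B}" "v \<in> {A..B}" for u v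
    proof -
      obtain \<xi> where "\<xi> \<in> {min u v..max u v}" "diffquot f f1 u v = f1 \<xi>"
        using dq_mvt[of u v f f1 "{A..B}"] d0 segS[OF uv] by blast
      moreover from this(1) have "\<xi> \<in> {A..B}" using segS[OF uv] by blast
      ultimately show ?thesis using m1 by auto
    qed
    show "\<exists>R. ratio_distortion f f1 x1 x2 x3
             = 1 + (x1 - x3) * (f2 x1 / (2 * f1 x1)
                 + 1/6 * schwarzian f1 f2 f3 x1 * (x2 + x3 - 2 * x1) + R)
           \<and> \<bar>R\<bar> \<le> C * (Max {x1, x2, x3} - Min {x1, x2, x3}) powr (1 + \<beta>)"
    proof (cases "x1 = x3")
      case True
      have "diffquot f f1 x2 x3 > 0" using dqpos[OF x2 x3] m1 by linarith
      then have "ratio_distortion f f1 x1 x2 x3 = 1"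
        unfolding ratio_distortion_def True using dq_sym[of f f1 x3 x2] by simp
      then show ?thesis using True C0 by (intro exI[of _ 0]) auto
    next
      case False
      define \<Delta> where "\<Delta> = hi - lo"
      have Dp: "0 < \<Delta>" using False unfolding \<Delta>_def lo_def hi_def by (auto simp: min_def max_def)
      have DW: "\<Delta> \<le> W" using IS W Dp unfolding \<Delta>_def by auto
      define a where "a = x2 - x1"
      define b where "b = x3 - x1"
      define F1 where "F1 = f1 x1"
      define F2 where "F2 = f2 x1"
      define F3 where "F3 = f3 x1"
      define g where "g = (\<lambda>y. f y - (f x1 + F1*(y-x1) + F2*(y-x1)^2/2 + F3*(y-x1)^3/6))"
      define h1 where "h1 = (\<lambda>y. f1 y - F1 - F2*(y-x1) - F3*(y-x1)^2/2)"
      define h2 where "h2 = (\<lambda>y. f2 y - F2 - F3*(y-x1))"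
      define h3 where "h3 = (\<lambda>y. f3 y - F3)"
      define P where "P = K * \<Delta> powr \<beta>"
      have P0: "0 \<le> P" unfolding P_def using K by simp
      have x1I: "x1 \<in> {lo..hi}" "x2 \<in> {lo..hi}" "x3 \<in> {lo..hi}" unfolding lo_def hi_def by auto
      have near: "\<bar>y - x1\<bar> \<le> \<Delta>" if "y \<in> {lo..hi}" for y using that x1I unfolding \<Delta>_def by auto
      have segI: "{min u v..max u v} \<subseteq> {lo..hi}" if "u \<in> {lo..hi}" "v \<in> {lo..hi}" for u v using that by auto
      have yAB: "y \<in> {A..B}" if "y \<in> {lo..hi}" for y using that IS by blast
      have dg: "\<forall>y\<in>{lo..hi}. (g has_real_derivative h1 y) (at y within {A..B})"
      proof
        fix y assume "y \<in> {lo..hi}"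
        then have "(f has_real_derivative f1 y) (at y within {A..B})" using d0 yAB by blast
        then show "(g has_real_derivative h1 y) (at y within {A..B})"
          unfolding g_def h1_def by (auto intro!: derivative_eq_intros simp: field_simps power2_eq_square)
      qed
      have dh1: "\<forall>y\<in>{lo..hi}. (h1 has_real_derivative h2 y) (at y within {A..B})"
      proof
        fix y assume "y \<in> {lo..hi}"
        then have "(f1 has_real_derivative f2 y) (at y within {A..B})" using d1 yAB by blast
        then show "(h1 has_real_derivative h2 y) (at y within {A..B})"
          unfolding h1_def h2_def by (auto intro!: derivative_eq_intros simp: field_simps power2_eq_square)
      qed
      have dh2: "\<forall>y\<in>{lo..hi}. (h2 has_real_derivative h3 y) (at y within {A..B})"
      proof
        fix y assume "y \<in> {lo..hi}"
        then have "(f2 has_real_derivative f3 y) (at y within {A..B})" using d2 yAB by blast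
        then show "(h2 has_real_derivative h3 y) (at y within {A..B})"
          unfolding h2_def h3_def by (auto intro!: derivative_eq_intros simp: field_simps)
      qed
      have bh3: "\<forall>y\<in>{lo..hi}. \<bar>h3 y\<bar> \<le> P"
      proof
        fix y assume y: "y \<in> {lo..hi}"
        have "\<bar>h3 y\<bar> \<le> K * \<bar>y - x1\<bar> powr \<beta>" unfolding h3_def F3_def using K(2) yAB[OF y] x1 by blast
        also have "\<dots> \<le> K * \<Delta> powr \<beta>" using K(1) b0 near[OF y] by (intro mult_left_mono powr_mono2) auto
        finally show "\<bar>h3 y\<bar> \<le> P" unfolding P_def .
      qed
      have bh2: "\<forall>y\<in>{lo..hi}. \<bar>h2 y\<bar> \<le> P * \<Delta>"
      proof
        fix y assume y: "y \<in> {lo..hi}"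
        have s: "{min y x1..max y x1} \<subseteq> {lo..hi}" using segI[OF y x1I(1)] .
        have "\<bar>h2 y - h2 x1\<bar> \<le> P * \<bar>y - x1\<bar>"
          using dh2 bh3 s IS by (intro G1[where h'=h3 and S="{A..B}"]) blast+
        also have "\<dots> \<le> P * \<Delta>" using P0 near[OF y] by (intro mult_left_mono) auto
        finally show "\<bar>h2 y\<bar> \<le> P * \<Delta>" unfolding h2_def F2_def by simp
      qed
      have bh1: "\<forall>y\<in>{lo..hi}. \<bar>h1 y\<bar> \<le> P * \<Delta> * \<Delta>"
      proof
        fix y assume y: "y \<in> {lo..hi}"
        have s: "{min y x1..max y x1} \<subseteq> {lo..hi}" using segI[OF y x1I(1)] .
        have "\<bar>h1 y - h1 x1\<bar> \<le> (P * \<Delta>) * \<bar>y - x1\<bar>"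
          using dh1 bh2 s IS by (intro G1[where h'=h2 and S="{A..B}"]) blast+
        also have "\<dots> \<le> P * \<Delta> * \<Delta>" using P0 Dp near[OF y] by (intro mult_left_mono) auto
        finally show "\<bar>h1 y\<bar> \<le> P * \<Delta> * \<Delta>" unfolding h1_def F1_def by simp
      qed
      have sd: "\<bar>diffquot g h1 x1 x2 - diffquot g h1 x2 x3\<bar> \<le> 2 * (P * \<Delta>) * \<bar>x1 - x3\<bar>"
        by (rule second_diff[OF dg dh1 IS bh2 _ lo_def hi_def]) (use bh1 \<Delta>_def in simp)
      have E23: "\<bar>diffquot g h1 x2 x3\<bar> \<le> P * \<Delta>^2"
      proof -
        have "\<bar>diffquot g h1 x2 x3\<bar> \<le> P * \<Delta> * \<Delta>"
          using dg bh1 segI[OF x1I(2,3)] IS by (intro dq_bound[where S="{A..B}"]) blast+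
        then show ?thesis by (simp add: power2_eq_square mult.assoc)
      qed
      have dec: "diffquot f f1 u v = F1 + F2/2*((u-x1)+(v-x1)) + F3/6*((u-x1)^2+(u-x1)*(v-x1)+(v-x1)^2) + diffquot g h1 u v" for u v
        unfolding g_def h1_def by (rule dq_decomp)
      have q12: "diffquot f f1 x1 x2 = F1 + F2/2*a + F3/6*a^2 + diffquot g h1 x1 x2"
        using dec[of x1 x2] unfolding a_def by simp
      have q23: "diffquot f f1 x2 x3 = F1 + F2/2*(a+b) + F3/6*(a^2+a*b+b^2) + diffquot g h1 x2 x3"
        using dec[of x2 x3] unfolding a_def b_def by simp
      have bnz: "b \<noteq> 0" using False b_def by simp
      have PW: "P \<le> K * W"
      proof -
        have "\<Delta> powr \<beta> \<le> W powr \<beta>" using Dp DW b0 by (intro powr_mono2) auto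
        also have "\<dots> \<le> W powr 1" using W b1 by (intro powr_mono) auto
        finally show ?thesis unfolding P_def using K(1) W by (intro mult_left_mono) auto
      qed
      have ab: "\<bar>a\<bar> \<le> \<Delta>" "\<bar>b\<bar> \<le> \<Delta>" using near x1I unfolding a_def b_def by auto
      have main: "\<bar>(diffquot f f1 x1 x2/diffquot f f1 x2 x3 - 1)/(-b) - (F2/(2*F1) + 1/6*(F3/F1 - 3/2*(F2/F1)^2)*(a+b))\<bar>
         \<le> (2*P*\<Delta> + Cs*\<Delta>^2)/m1"
        unfolding Cs_def
      proof (rule alg_bound[OF m1(1) _ _ _ ab bnz DW W(1) _ E23 P0 PW _ q12 q23])
        show "m1 \<le> F1" using m1 x1 F1_def by auto
        show "\<bar>F2\<bar> \<le> M2" using M2 x1 F2_def by auto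
        show "\<bar>F3\<bar> \<le> M3" using M3 x1 F3_def by auto
        show "m1 \<le> diffquot f f1 x2 x3" using dqpos[OF x2 x3] .
        show "\<bar>diffquot g h1 x1 x2 - diffquot g h1 x2 x3\<bar> \<le> 2 * P * \<Delta> * \<bar>b\<bar>"
          using sd unfolding b_def by (simp add: abs_minus_commute mult.assoc)
      qed
      define R where "R = (diffquot f f1 x1 x2/diffquot f f1 x2 x3 - 1)/(x1 - x3)
          - (f2 x1 / (2 * f1 x1) + 1/6 * schwarzian f1 f2 f3 x1 * (x2 + x3 - 2 * x1))"
      have meq: "f2 x1 / (2 * f1 x1) + 1/6 * schwarzian f1 f2 f3 x1 * (x2 + x3 - 2 * x1)
          = F2/(2*F1) + 1/6*(F3/F1 - 3/2*(F2/F1)^2)*(a+b)"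
        unfolding schwarzian_def F1_def F2_def F3_def a_def b_def by (simp add: algebra_simps)
      have mb: "-b = x1 - x3" unfolding b_def by simp
      have Rb: "\<bar>R\<bar> \<le> (2*P*\<Delta> + Cs*\<Delta>^2)/m1" using main unfolding R_def meq mb .
      have X: "P * \<Delta> = K * \<Delta> powr (1 + \<beta>)"
        unfolding P_def using Dp by (simp add: powr_add mult.assoc)
      have Y: "\<Delta>^2 \<le> W * \<Delta> powr (1 + \<beta>)"
      proof -
        have "\<Delta> powr (1 + \<beta>) * \<Delta> powr (1 - \<beta>) = \<Delta> powr ((1 + \<beta>) + (1 - \<beta>))"
          by (rule powr_add[symmetric])
        also have "\<dots> = \<Delta> powr 2" by simp
        also have "\<dots> = \<Delta>^2" using Dp by simp
        finally have "\<Delta>^2 = \<Delta> powr (1 + \<beta>) * \<Delta> powr (1 - \<beta>)" by simp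
        also have "\<Delta> powr (1 - \<beta>) \<le> W"
        proof -
          have "\<Delta> powr (1 - \<beta>) \<le> W powr (1 - \<beta>)" using Dp DW b1 by (intro powr_mono2) auto
          also have "\<dots> \<le> W powr 1" using W b0 by (intro powr_mono) auto
          finally show ?thesis using W by simp
        qed
        then have "\<Delta> powr (1 + \<beta>) * \<Delta> powr (1 - \<beta>) \<le> \<Delta> powr (1 + \<beta>) * W"
          by (intro mult_left_mono) auto
        finally show ?thesis by (simp add: mult.commute)
      qed
      have "(2*P*\<Delta> + Cs*\<Delta>^2)/m1 \<le> (2*(K * \<Delta> powr (1 + \<beta>)) + Cs*(W * \<Delta> powr (1 + \<beta>)))/m1"
        using X Y Cs0 m1(1) by (intro divide_right_mono add_mono mult_left_mono) (auto simp: mult.assoc)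
      also have "\<dots> = C * \<Delta> powr (1 + \<beta>)" unfolding C_def by (simp add: field_simps)
      finally have Rb2: "\<bar>R\<bar> \<le> C * \<Delta> powr (1 + \<beta>)" using Rb by linarith
      have x13: "x1 - x3 \<noteq> 0" using False by simp
      have eq: "ratio_distortion f f1 x1 x2 x3
             = 1 + (x1 - x3) * (f2 x1 / (2 * f1 x1)
                 + 1/6 * schwarzian f1 f2 f3 x1 * (x2 + x3 - 2 * x1) + R)"
      proof -
        have "(x1 - x3) * ((diffquot f f1 x1 x2/diffquot f f1 x2 x3 - 1)/(x1 - x3)) = diffquot f f1 x1 x2/diffquot f f1 x2 x3 - 1"
          using x13 by simp
        then show ?thesis unfolding R_def ratio_distortion_def by (simp add: distrib_left)
      qed
      show ?thesis using eq Rb2 unfolding MaxMin \<Delta>_def by blast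
    qed
  qed
qed

end
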